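(* Let $K>0$, $1\le\ell\le L$, $r_\ell=Kh_{\ell-1}|\log h_{\ell-1}|$, and let $\mathbf p_\ell^{\rm tr}$ be the truncation of $\mathbf p_\ell$ keeping the entry at row $\eta\in\Xi_\ell$, column $\xi\in\Xi_{\ell-1}$ when $\mathrm{dist}(\xi,\eta)\le r_\ell$ and setting it to $0$ otherwise. Then there is a constant $C_{\rm trunc}$, independent of $\ell$, such that $$\|\mathbf p_\ell-\mathbf p_\ell^{\rm tr}\|_{\ell_2(\Xi_{\ell-1})\to\ell_2(\Xi_\ell)}\le C_{pw}C_{\rm trunc}(K|\log h_\ell|)^dh_\ell^{\frac\nu2K}.$$
   Context: Let $\mathbb{M}$ be a compact $d$-dimensional Riemannian manifold without boundary, with volume measure $\mu$, geodesic distance $\mathrm{dist}$, balls $B(x,r)$, Sobolev spaces $W_2^k(\mathbb M)$. For finite $\Xi$: $q=\frac12\min_{\zeta\in\Xi}\mathrm{dist}(\zeta,\Xi\setminus\{\zeta\})$, $h=\sup_x\mathrm{dist}(x,\Xi)$. Kernel $\phi$ conditionally positive definite w.r.t. finite-dimensional $\Pi\subset C^\infty(\mathbb M)$, native space $\cong W_2^m(\mathbb M)$ modulo $\Pi$, integer $m>d/2+1$; trial spaces $V_\Xi=\{\sum_\xi a_\xi\phi(\cdot,\xi):\sum_\xi a_\xi p(\xi)=0\ \forall p\in\Pi\}+\Pi$ with Lagrange bases $\chi_\xi$, $\chi_\xi(\zeta)=\delta_{\xi\zeta}$, satisfying $\|\chi_\xi\|_{W_2^m(\mathbb{M}\setminus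 B(\xi,R))}\le C_{en}q^{d/2-m}e^{-\nu R/h}$ (constants $\nu>0$, $C_{en}$). $C_{pw}$ is a constant with $|\chi_\xi(x)|\le C_{pw}e^{-\nu\,\mathrm{dist}(x,\xi)/h}$ for all $x\in\mathbb M$, all point sets $\Xi$ considered and $\xi\in\Xi$. Multilevel: nested $\Xi_0\subset\dots\subset\Xi_L$ separating elements of $\Pi$, $h_\ell=h(\Xi_\ell)$, $q_\ell\le h_\ell\le\rho q_\ell$, $\gamma_1h_\ell\le h_{\ell+1}\le\gamma_2h_\ell$ ($\rho\ge1$, $0<\gamma_1\le\gamma_2<1$), $n_\ell=\#\Xi_\ell$, Lagrange bases $\chi^{(\ell)}_\xi$; prolongation $\mathbf p_\ell\in\mathbb R^{n_\ell\times n_{\ell-1}}$ with entry $\chi^{(\ell-1)}_\xi(\eta)$ at row $\eta\in\Xi_\ell$, column $\xi\in\Xi_{\ell-1}$. *)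

theory Defs
  imports "HOL-Analysis.Analysis"
begin

definition fill_dist :: "'a::metric_space set \<Rightarrow> real" where
  "fill_dist Xi = (SUP x\<in>(UNIV::'a set). infdist x Xi)"

definition sep_rad :: "'a::metric_space set \<Rightarrow> real" where
  "sep_rad Xi = Inf {dist z z' | z z'. z \<in> Xi \<and> z' \<in> Xi \<and> z \<noteq> z'} / 2"

text \<open>Prolongation matrix p_l: entry at row eta in Xi_l, column xi in Xi_(l-1)
  is chi^(l-1)_xi(eta).  chi l xi x stands for the Lagrange function chi^(l)_xi(x).\<close>
definition prolong :: "(nat \<Rightarrow> 'a \<Rightarrow> 'a \<Rightarrow> real) \<Rightarrow> nat \<Rightarrow> 'a \<Rightarrow> 'a \<Rightarrow> real" where
  "prolong chi l eta xi = chi (l - 1) xi eta"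

definition prolong_tr ::
  "(nat \<Rightarrow> 'a::metric_space \<Rightarrow> 'a \<Rightarrow> real) \<Rightarrow> real \<Rightarrow> nat \<Rightarrow> 'a \<Rightarrow> 'a \<Rightarrow> real" where
  "prolong_tr chi r l eta xi = (if dist xi eta \<le> r then prolong chi l eta xi else 0)"

text \<open>Operator norm l2(X) \<rightarrow> l2(Y) of a matrix A (row index in Y, column index in X).\<close>
definition l2_opnorm :: "('r \<Rightarrow> 'c \<Rightarrow> real) \<Rightarrow> 'c set \<Rightarrow> 'r set \<Rightarrow> real" where
  "l2_opnorm A X Y =
     (SUP v\<in>{v. (\<Sum>x\<in>X. (v x)^2) \<le> 1}. sqrt (\<Sum>y\<in>Y. (\<Sum>x\<in>X. A y x * v x)^2))"

end

theory Submission
  imports Defs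
begin


lemma cs_weighted:
  fixes w u :: "'c \<Rightarrow> real"
  assumes "\<And>x. x \<in> X \<Longrightarrow> 0 \<le> w x"
  shows "(\<Sum>x\<in>X. w x * u x)^2 \<le> (\<Sum>x\<in>X. w x) * (\<Sum>x\<in>X. w x * (u x)^2)"
proof -
  have "(\<Sum>x\<in>X. w x * u x) = (\<Sum>x\<in>X. sqrt (w x) * (sqrt (w x) * u x))"
    using assms by (intro sum.cong) (auto simp flip: mult.assoc)
  also have "(\<dots>)^2 \<le> (\<Sum>x\<in>X. (sqrt (w x))^2) * (\<Sum>x\<in>X. (sqrt (w x) * u x)^2)"
    by (rule Cauchy_Schwarz_ineq_sum)
  also have "\<dots> = (\<Sum>x\<in>X. w x) * (\<Sum>x\<in>X. w x * (u x)^2)"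
    using assms by (simp add: power_mult_distrib)
  finally show ?thesis .
qed

lemma schur:
  fixes A :: "'r \<Rightarrow> 'c \<Rightarrow> real"
  assumes fX: "finite X" and fY: "finite Y"
    and row: "\<And>y. y \<in> Y \<Longrightarrow> (\<Sum>x\<in>X. \<bar>A y x\<bar>) \<le> R"
    and col: "\<And>x. x \<in> X \<Longrightarrow> (\<Sum>y\<in>Y. \<bar>A y x\<bar>) \<le> C"
    and R: "0 \<le> R" and C: "0 \<le> C"
  shows "l2_opnorm A X Y \<le> sqrt (R * C)"
  unfolding l2_opnorm_def
proof (rule cSUP_least)
  show "{v::'c\<Rightarrow>real. (\<Sum>x\<in>X. (v x)\<^sup>2) \<le> 1} \<noteq> {}" proof -
    have "(\<lambda>_. 0) \<in> {v::'c\<Rightarrow>real. (\<Sum>x\<in>X. (v x)\<^sup>2) \<le> 1}" by simp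
    then show ?thesis by (metis empty_iff)
  qed
next
  fix v :: "'c \<Rightarrow> real" assume "v \<in> {v::'c\<Rightarrow>real. (\<Sum>x\<in>X. (v x)\<^sup>2) \<le> 1}"
  then have v: "(\<Sum>x\<in>X. (v x)\<^sup>2) \<le> 1" by simp
  have "(\<Sum>y\<in>Y. (\<Sum>x\<in>X. A y x * v x)^2) \<le> (\<Sum>y\<in>Y. R * (\<Sum>x\<in>X. \<bar>A y x\<bar> * (v x)^2))"
  proof (rule sum_mono)
    fix y assume y: "y \<in> Y"
    have "(\<Sum>x\<in>X. A y x * v x)^2 = (\<Sum>x\<in>X. \<bar>A y x\<bar> * (sgn (A y x) * v x))^2"
      by (intro arg_cong[where f="\<lambda>t. t^2"] sum.cong) (auto simp: sgn_if)
    also have "\<dots> \<le> (\<Sum>x\<in>X. \<bar>A y x\<bar>) * (\<Sum>x\<in>X. \<bar>A y x\<bar> * (sgn (A y x) * v x)^2)"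
      by (rule cs_weighted) simp
    also have "(\<Sum>x\<in>X. \<bar>A y x\<bar> * (sgn (A y x) * v x)^2) = (\<Sum>x\<in>X. \<bar>A y x\<bar> * (v x)^2)"
      by (intro sum.cong) (auto simp: power_mult_distrib sgn_if)
    also have "(\<Sum>x\<in>X. \<bar>A y x\<bar>) * (\<Sum>x\<in>X. \<bar>A y x\<bar> * (v x)^2) \<le> R * (\<Sum>x\<in>X. \<bar>A y x\<bar> * (v x)^2)"
      by (intro mult_right_mono row y sum_nonneg) auto
    finally show "(\<Sum>x\<in>X. A y x * v x)^2 \<le> R * (\<Sum>x\<in>X. \<bar>A y x\<bar> * (v x)^2)" .
  qed
  also have "\<dots> = R * (\<Sum>x\<in>X. (v x)^2 * (\<Sum>y\<in>Y. \<bar>A y x\<bar>))"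
    by (simp add: sum_distrib_left sum_distrib_right mult_ac sum.swap[of _ Y X])
  also have "\<dots> \<le> R * (\<Sum>x\<in>X. (v x)^2 * C)"
    by (intro mult_left_mono R sum_mono) (auto intro: col)
  also have "\<dots> = R * ((\<Sum>x\<in>X. (v x)^2) * C)"
    by (simp add: sum_distrib_right)
  also have "\<dots> \<le> R * (1 * C)"
    by (intro mult_left_mono mult_right_mono v R C)
  also have "\<dots> = R * C" by simp
  finally show "sqrt (\<Sum>y\<in>Y. (\<Sum>x\<in>X. A y x * v x)\<^sup>2) \<le> sqrt (R * C)" by simp
qed



lemma count_bound:
  fixes \<mu> :: "'a::metric_space measure" and d :: nat and S :: "'a set"
  assumes sets_mu: "sets \<mu> = sets borel" and fin_mu: "emeasure \<mu> UNIV < \<infinity>"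
    and ball_lower: "\<And>x r. 0 < r \<Longrightarrow> r \<le> diameter (UNIV :: 'a set) \<Longrightarrow> c1 * r ^ d \<le> measure \<mu> (ball x r)"
    and ball_upper: "\<And>x r. 0 < r \<Longrightarrow> measure \<mu> (ball x r) \<le> c2 * r ^ d"
    and fS: "finite S" and q: "0 < q" "q \<le> diameter (UNIV::'a set)"
    and sep: "\<And>z z'. z \<in> S \<Longrightarrow> z' \<in> S \<Longrightarrow> z \<noteq> z' \<Longrightarrow> 2 * q \<le> dist z z'"
    and R: "0 < R" and inS: "\<And>x. x \<in> S \<Longrightarrow> dist x eta < R"
  shows "real (card S) * (c1 * q ^ d) \<le> c2 * (R + q) ^ d"
proof -
  have sp: "space \<mu> = UNIV" using sets_eq_imp_space_eq[OF sets_mu] by simp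
  interpret finite_measure \<mu>
    by (rule finite_measureI) (use fin_mu sp in auto)
  have bs: "ball x r \<in> sets \<mu>" for x r using sets_mu by simp
  have disj: "disjoint_family_on (\<lambda>x. ball x q) S"
    unfolding disjoint_family_on_def
  proof (intro ballI impI)
    fix x y assume xy: "x \<in> S" "y \<in> S" "x \<noteq> y"
    show "ball x q \<inter> ball y q = {}"
    proof (rule ccontr)
      assume "ball x q \<inter> ball y q \<noteq> {}"
      then obtain z where z: "dist x z < q" "dist y z < q" by auto
      have "dist x y \<le> dist x z + dist y z" by (rule dist_triangle2)
      with z sep[OF xy] show False by linarith
    qed
  qed
  have "real (card S) * (c1 * q ^ d) = (\<Sum>x\<in>S. c1 * q ^ d)" by simp
  also have "\<dots> \<le> (\<Sum>x\<in>S. measure \<mu> (ball x q))"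
    by (intro sum_mono ball_lower q)
  also have "\<dots> = measure \<mu> (\<Union>x\<in>S. ball x q)"
    by (rule finite_measure_finite_Union[symmetric]) (use fS disj bs in auto)
  also have "\<dots> \<le> measure \<mu> (ball eta (R + q))"
  proof (rule finite_measure_mono)
    show "(\<Union>x\<in>S. ball x q) \<subseteq> ball eta (R + q)"
    proof
      fix y assume "y \<in> (\<Union>x\<in>S. ball x q)"
      then obtain x where x: "x \<in> S" "dist x y < q" by auto
      have "dist eta y \<le> dist x eta + dist x y" by (rule dist_triangle3)
      with x inS[OF x(1)] show "y \<in> ball eta (R + q)" by simp
    qed
  qed (rule bs)
  also have "\<dots> \<le> c2 * (R + q) ^ d"
    using R q by (intro ball_upper) simp
  finally show ?thesis .
qed

lemma poly_exp_bound:
  fixes s \<beta> :: real and d :: nat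
  assumes s: "0 \<le> s" and b: "0 < \<beta>" "\<beta> \<le> 1" and d: "d \<ge> 1"
  shows "(s / \<beta> + 1) ^ d \<le> (2 * d / \<beta>) ^ d * exp (s / 2)"
proof -
  have "1 \<le> 2 * real d / \<beta>" using b d by (simp add: field_simps)
  have "s / \<beta> + 1 = 2 * d / \<beta> + s / \<beta> - 2 * d / \<beta> + 1" by simp
  have e1: "s / \<beta> + 1 \<le> (2 * d / \<beta>) * (1 + s / (2 * d))"
    using \<open>1 \<le> 2 * real d / \<beta>\<close> b d by (simp add: field_simps)
  have e2: "1 + s / (2 * d) \<le> exp (s / (2 * d))"
    by (rule exp_ge_add_one_self[unfolded add.commute[of _ 1]])
  have "(s / \<beta> + 1) ^ d \<le> ((2 * d / \<beta>) * exp (s / (2 * d))) ^ d"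
    using e1 e2 b s by (intro power_mono order.trans[OF e1] mult_left_mono) (auto simp: field_simps)
  also have "\<dots> = (2 * d / \<beta>) ^ d * exp (real d * (s / (2 * d)))"
    by (simp only: power_mult_distrib exp_of_nat_mult)
  also have "exp (real d * (s / (2 * d))) = exp (s / 2)" using d by (simp add: field_simps)
  finally show ?thesis .
qed



lemma exp_sum_bound:
  fixes \<mu> :: "'a::metric_space measure" and d :: nat and X :: "'a set"
  assumes sets_mu: "sets \<mu> = sets borel" and fin_mu: "emeasure \<mu> UNIV < \<infinity>"
    and ball_lower: "\<And>x r. 0 < r \<Longrightarrow> r \<le> diameter (UNIV :: 'a set) \<Longrightarrow> c1 * r ^ d \<le> measure \<mu> (ball x r)"
    and ball_upper: "\<And>x r. 0 < r \<Longrightarrow> measure \<mu> (ball x r) \<le> c2 * r ^ d"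
    and c1: "0 < c1" and d: "d \<ge> 1"
    and fX: "finite X" and q: "0 < q" "q \<le> diameter (UNIV::'a set)"
    and sep: "\<And>z z'. z \<in> X \<Longrightarrow> z' \<in> X \<Longrightarrow> z \<noteq> z' \<Longrightarrow> 2 * q \<le> dist z z'"
    and a: "0 < a" and b: "0 < \<beta>" "\<beta> \<le> 1" "\<beta> \<le> a * q"
  shows "(\<Sum>x\<in>X. exp (- a * dist x eta)) \<le> (c2 / c1) * (2 * d / \<beta>) ^ d * exp (1/2) / (1 - exp (- 1/2))"
proof -
  define k where "k x = nat \<lfloor>a * dist x eta\<rfloor>" for x
  define G where "G = (c2 / c1) * (2 * d / \<beta>) ^ d * exp (1/2)"
  have c2: "0 \<le> c2"
  proof -
    have "0 \<le> measure \<mu> (ball eta 1)" by simp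
    also have "\<dots> \<le> c2 * 1 ^ d" by (rule ball_upper) simp
    finally show "0 \<le> c2" by simp
  qed
  have G0: "0 \<le> G" unfolding G_def using c1 c2 b by simp
  have kle: "real (k x) \<le> a * dist x eta" for x
    unfolding k_def using a by (simp add: of_nat_nat)
  have klt: "a * dist x eta < real (k x) + 1" for x
    unfolding k_def using a by (simp add: of_nat_nat)
  have "(\<Sum>x\<in>X. exp (- a * dist x eta)) \<le> (\<Sum>x\<in>X. exp (- real (k x)))"
    using kle by (intro sum_mono) simp
  also have "\<dots> = (\<Sum>m\<in>k ` X. (\<Sum>x\<in>{x. x \<in> X \<and> k x = m}. exp (- real (k x))))"
    by (rule sum.group[symmetric]) (use fX in auto)
  also have "\<dots> = (\<Sum>m\<in>k ` X. real (card {x. x \<in> X \<and> k x = m}) * exp (- real m))"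
    by (intro sum.cong refl) simp
  also have "\<dots> \<le> (\<Sum>m\<in>k ` X. G * exp (-1/2) ^ m)"
  proof (intro sum_mono)
    fix m assume "m \<in> k ` X"
    define S where "S = {x. x \<in> X \<and> k x = m}"
    have "real (card S) * (c1 * q ^ d) \<le> c2 * ((real m + 1) / a + q) ^ d"
    proof (rule count_bound[OF sets_mu fin_mu ball_lower ball_upper])
      show "finite S" unfolding S_def using fX by simp
      show "0 < (real m + 1) / a" using a by simp
      fix x assume "x \<in> S"
      then have "a * dist x eta < real m + 1" using klt[of x] unfolding S_def by simp
      then show "dist x eta < (real m + 1) / a" using a by (simp add: field_simps)
    qed (use q sep in \<open>auto simp: S_def\<close>)
    also have "(real m + 1) / a + q = q * ((m + 1) / (a * q) + 1)" using a q by (simp add: field_simps)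
    also have "c2 * (q * ((m + 1) / (a * q) + 1)) ^ d = (c2 * ((m + 1) / (a * q) + 1) ^ d) * q ^ d"
      by (simp add: power_mult_distrib)
    finally have "real (card S) * c1 \<le> c2 * ((m + 1) / (a * q) + 1) ^ d"
      using q by (simp add: mult.assoc[symmetric])
    then have cS: "real (card S) \<le> (c2 / c1) * ((m + 1) / (a * q) + 1) ^ d"
      using c1 by (simp add: field_simps)
    have "(m + 1) / (a * q) \<le> (m + 1) / \<beta>"
      using b a q by (intro divide_left_mono) auto
    then have "((m + 1) / (a * q) + 1) ^ d \<le> ((m + 1) / \<beta> + 1) ^ d"
      using a q by (intro power_mono) auto
    also have "\<dots> \<le> (2 * d / \<beta>) ^ d * exp ((m + 1) / 2)"
      using poly_exp_bound[of "real m + 1" \<beta> d] b d by (simp add: add.commute)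
    finally have "real (card S) \<le> (c2 / c1) * ((2 * d / \<beta>) ^ d * exp ((m + 1) / 2))"
      using cS G0 c1 \<open>0 \<le> c2\<close> by (meson order.trans mult_left_mono divide_nonneg_pos less_imp_le)
    then have "real (card S) * exp (- real m) \<le> (c2 / c1) * ((2 * d / \<beta>) ^ d * exp ((m + 1) / 2)) * exp (- real m)"
      by (intro mult_right_mono) auto
    also have "\<dots> = G * (exp ((m + 1) / 2) * exp (- real m) / exp (1/2))"
      unfolding G_def by simp
    also have "exp ((m + 1) / 2) * exp (- real m) / exp (1/2) = exp (-1/2) ^ m"
      by (simp add: exp_add[symmetric] exp_diff[symmetric] exp_of_nat_mult[symmetric] field_simps)
    finally show "real (card {x \<in> X. k x = m}) * exp (- real m) \<le> G * exp (- 1 / 2) ^ m"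
      unfolding S_def .
  qed
  also have "\<dots> \<le> G / (1 - exp (- 1/2))"
  proof -
    obtain M where M: "k ` X \<subseteq> {..<M}" using finite_nat_bounded[of "k ` X"] fX by auto
    have r: "0 < exp (-1/2::real)" "exp (-1/2::real) < 1" by auto
    have "(\<Sum>m\<in>k ` X. G * exp (-1/2) ^ m) \<le> (\<Sum>m\<in>{..<M}. G * exp (-1/2) ^ m)"
      using M G0 by (intro sum_mono2) auto
    also have "\<dots> = G * ((1 - exp (-1/2) ^ M) / (1 - exp (-1/2)))"
      using r by (simp add: sum_distrib_left[symmetric] sum_gp_strict)
    also have "\<dots> \<le> G * (1 / (1 - exp (-1/2)))"
      using r G0 by (intro mult_left_mono divide_right_mono) auto
    finally show ?thesis by simp
  qed
  finally show ?thesis unfolding G_def by simp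
qed



lemma fill_props:
  fixes X :: "'a::metric_space set"
  assumes cpt: "compact (UNIV :: 'a set)" and ne: "X \<noteq> {}"
  shows "infdist x X \<le> fill_dist X" "0 \<le> fill_dist X"
proof -
  obtain x0 where x0: "x0 \<in> X" using ne by auto
  have bd: "bounded (UNIV :: 'a set)" using cpt by (rule compact_imp_bounded)
  have "infdist y X \<le> diameter (UNIV :: 'a set)" for y
    using infdist_le[OF x0, of y] diameter_bounded_bound[OF bd, of y x0] by simp
  then have bdd: "bdd_above (range (\<lambda>y. infdist y X))" by (intro bdd_aboveI[where M="diameter (UNIV::'a set)"]) auto
  show "infdist x X \<le> fill_dist X" unfolding fill_dist_def
    by (rule cSUP_upper[OF _ bdd]) simp
  then show "0 \<le> fill_dist X" using infdist_nonneg[of x X] by linarith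
qed

lemma fill_zero:
  fixes X :: "'a::metric_space set"
  assumes cpt: "compact (UNIV :: 'a set)" and ne: "X \<noteq> {}" and fX: "finite X"
    and z: "fill_dist X = 0"
  shows "x \<in> X"
proof -
  have "infdist x X = 0" using fill_props(1)[OF cpt ne, of x] z infdist_nonneg[of x X] by linarith
  then show ?thesis using in_closed_iff_infdist_zero[OF finite_imp_closed[OF fX] ne] by simp
qed

lemma sep_props:
  fixes X :: "'a::metric_space set"
  assumes cpt: "compact (UNIV :: 'a set)" and fX: "finite X"
    and xy: "x \<in> X" "y \<in> X" "x \<noteq> y"
  shows "0 < sep_rad X" "sep_rad X \<le> diameter (UNIV :: 'a set)"
    "\<And>z z'. z \<in> X \<Longrightarrow> z' \<in> X \<Longrightarrow> z \<noteq> z' \<Longrightarrow> 2 * sep_rad X \<le> dist z z'"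
proof -
  define D where "D = {dist z z' | z z'. z \<in> X \<and> z' \<in> X \<and> z \<noteq> z'}"
  have sub: "D \<subseteq> (\<lambda>(z, z'). dist z z') ` (X \<times> X)" unfolding D_def by auto
  have fD: "finite D" by (rule finite_subset[OF sub]) (use fX in simp)
  have neD: "D \<noteq> {}" unfolding D_def using xy by auto
  have sr: "sep_rad X = Inf D / 2" unfolding sep_rad_def D_def by simp
  show low: "2 * sep_rad X \<le> dist z z'" if "z \<in> X" "z' \<in> X" "z \<noteq> z'" for z z'
  proof -
    have "dist z z' \<in> D" unfolding D_def using that by auto
    then have "Inf D \<le> dist z z'" using fD by (intro cInf_lower) (auto intro: bdd_below_finite)
    then show ?thesis using sr by simp
  qed
  have "Inf D = Min D" using fD neD by (rule cInf_eq_Min)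
  moreover have "Min D \<in> D" using fD neD by (rule Min_in)
  moreover have "\<forall>t\<in>D. 0 < t" unfolding D_def by auto
  ultimately show pos: "0 < sep_rad X" using sr by auto
  have bd: "bounded (UNIV :: 'a set)" using cpt by (rule compact_imp_bounded)
  have "dist x y \<le> diameter (UNIV :: 'a set)" by (rule diameter_bounded_bound[OF bd]) auto
  then show "sep_rad X \<le> diameter (UNIV :: 'a set)" using low[OF xy] pos by linarith
qed

lemma exp_sum_all:
  fixes \<mu> :: "'a::metric_space measure" and d :: nat and X :: "'a set"
  assumes cpt: "compact (UNIV :: 'a set)"
    and sets_mu: "sets \<mu> = sets borel" and fin_mu: "emeasure \<mu> UNIV < \<infinity>"
    and ball_lower: "\<And>x r. 0 < r \<Longrightarrow> r \<le> diameter (UNIV :: 'a set) \<Longrightarrow> c1 * r ^ d \<le> measure \<mu> (ball x r)"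
    and ball_upper: "\<And>x r. 0 < r \<Longrightarrow> measure \<mu> (ball x r) \<le> c2 * r ^ d"
    and c1: "0 < c1" and d: "d \<ge> 1"
    and fX: "finite X"
    and a: "0 < a" and b: "0 < \<beta>" "\<beta> \<le> 1" "\<beta> \<le> a * sep_rad X"
  shows "(\<Sum>x\<in>X. exp (- a * dist x eta)) \<le> max 1 ((c2 / c1) * (2 * d / \<beta>) ^ d * exp (1/2) / (1 - exp (- 1/2)))"
proof (cases "\<exists>x\<in>X. \<exists>y\<in>X. x \<noteq> y")
  case True
  then obtain x y where xy: "x \<in> X" "y \<in> X" "x \<noteq> y" by auto
  have "(\<Sum>x\<in>X. exp (- a * dist x eta)) \<le> (c2 / c1) * (2 * d / \<beta>) ^ d * exp (1/2) / (1 - exp (- 1/2))"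
    by (rule exp_sum_bound[OF sets_mu fin_mu ball_lower ball_upper c1 d fX sep_props(1,2)[OF cpt fX xy]
          sep_props(3)[OF cpt fX xy] a b])
  then show ?thesis by linarith
next
  case False
  then have "X = {} \<or> (\<exists>x0. X = {x0})" by blast
  then have "(\<Sum>x\<in>X. exp (- a * dist x eta)) \<le> 1"
    using a by auto
  then show ?thesis by linarith
qed



theorem lemma7p3:
  fixes \<mu> :: "'a::metric_space measure"
    and d :: nat and c1 c2 \<nu> Cpw K \<rho> \<gamma>1 \<gamma>2 hmax :: real
  assumes compact: "compact (UNIV :: 'a set)"
    and sets_mu: "sets \<mu> = sets borel"
    and dim: "d \<ge> 1"
    and c_pos: "c1 > 0" "c2 > 0"
    and ball_lower: "\<And>x r. 0 < r \<Longrightarrow> r \<le> diameter (UNIV :: 'a set) \<Longrightarrow> c1 * r ^ d \<le> measure \<mu> (ball x r)"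
    and ball_upper: "\<And>x r. 0 < r \<Longrightarrow> measure \<mu> (ball x r) \<le> c2 * r ^ d"
    and fin_mu: "emeasure \<mu> UNIV < \<infinity>"
    and nu_pos: "\<nu> > 0"
    and K_pos: "K > 0"
    and rho: "\<rho> \<ge> 1"
    and gammas: "0 < \<gamma>1" "\<gamma>1 \<le> \<gamma>2" "\<gamma>2 < 1"
    and hmax: "0 < hmax" "hmax < 1"
  shows "\<exists>Ctrunc. \<forall>(L::nat) (Xi :: nat \<Rightarrow> 'a set) (chi :: nat \<Rightarrow> 'a \<Rightarrow> 'a \<Rightarrow> real) (l::nat).
     ((\<forall>j\<le>L. finite (Xi j) \<and> Xi j \<noteq> {}) \<and>
      (\<forall>j<L. Xi j \<subseteq> Xi (Suc j)) \<and>
      (\<forall>j\<le>L. sep_rad (Xi j) \<le> fill_dist (Xi j) \<and> fill_dist (Xi j) \<le> \<rho> * sep_rad (Xi j)) \<and>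
      (\<forall>j<L. \<gamma>1 * fill_dist (Xi j) \<le> fill_dist (Xi (Suc j)) \<and>
             fill_dist (Xi (Suc j)) \<le> \<gamma>2 * fill_dist (Xi j)) \<and>
      fill_dist (Xi 0) \<le> hmax \<and>
      (\<forall>j\<le>L. \<forall>xi\<in>Xi j. \<forall>z\<in>Xi j. chi j xi z = (if xi = z then 1 else 0)) \<and>
      (\<forall>j\<le>L. \<forall>xi\<in>Xi j. \<forall>x. \<bar>chi j xi x\<bar> \<le> Cpw * exp (- \<nu> * dist x xi / fill_dist (Xi j))) \<and>
      1 \<le> l \<and> l \<le> L)
     \<longrightarrow>
     l2_opnorm
       (\<lambda>eta xi. prolong chi l eta xi
          - prolong_tr chi (K * fill_dist (Xi (l - 1)) * \<bar>ln (fill_dist (Xi (l - 1)))\<bar>) l eta xi)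
       (Xi (l - 1)) (Xi l)
     \<le> Cpw * Ctrunc * (K * \<bar>ln (fill_dist (Xi l))\<bar>) ^ d * fill_dist (Xi l) powr (\<nu> / 2 * K)"
proof -
  define \<beta> where "\<beta> = min 1 (\<nu> * \<gamma>1 / (2 * \<rho>))"
  define Bc where "Bc = max 1 ((c2 / c1) * (2 * d / \<beta>) ^ d * exp (1/2) / (1 - exp (- 1/2)))"
  define e where "e = \<nu> / 2 * K"
  define P where "P = (K * \<bar>ln hmax\<bar>) ^ d"
  have b0: "0 < \<beta>" "\<beta> \<le> 1" "\<beta> \<le> \<nu> * \<gamma>1 / (2 * \<rho>)"
    unfolding \<beta>_def using nu_pos gammas rho by auto
  have Bc1: "1 \<le> Bc" unfolding Bc_def by simp
  have e0: "0 < e" unfolding e_def using nu_pos K_pos by simp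
  have lnh: "0 < \<bar>ln hmax\<bar>" using hmax by simp
  have P0: "0 < P" unfolding P_def using K_pos lnh by simp
  show ?thesis
  proof (rule exI[of _ "Bc * \<gamma>1 powr (- e) / P"], intro allI impI)
    fix L :: nat and Xi :: "nat \<Rightarrow> 'a set" and chi :: "nat \<Rightarrow> 'a \<Rightarrow> 'a \<Rightarrow> real" and l :: nat
    assume H: "(\<forall>j\<le>L. finite (Xi j) \<and> Xi j \<noteq> {}) \<and>
      (\<forall>j<L. Xi j \<subseteq> Xi (Suc j)) \<and>
      (\<forall>j\<le>L. sep_rad (Xi j) \<le> fill_dist (Xi j) \<and> fill_dist (Xi j) \<le> \<rho> * sep_rad (Xi j)) \<and>
      (\<forall>j<L. \<gamma>1 * fill_dist (Xi j) \<le> fill_dist (Xi (Suc j)) \<and>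
             fill_dist (Xi (Suc j)) \<le> \<gamma>2 * fill_dist (Xi j)) \<and>
      fill_dist (Xi 0) \<le> hmax \<and>
      (\<forall>j\<le>L. \<forall>xi\<in>Xi j. \<forall>z\<in>Xi j. chi j xi z = (if xi = z then 1 else 0)) \<and>
      (\<forall>j\<le>L. \<forall>xi\<in>Xi j. \<forall>x. \<bar>chi j xi x\<bar> \<le> Cpw * exp (- \<nu> * dist x xi / fill_dist (Xi j))) \<and>
      1 \<le> l \<and> l \<le> L"
    from H have fin: "\<And>j. j \<le> L \<Longrightarrow> finite (Xi j)" and ne: "\<And>j. j \<le> L \<Longrightarrow> Xi j \<noteq> {}"
      and nest: "\<And>j. j < L \<Longrightarrow> Xi j \<subseteq> Xi (Suc j)"
      and qh: "\<And>j. j \<le> L \<Longrightarrow> fill_dist (Xi j) \<le> \<rho> * sep_rad (Xi j)"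
      and g1: "\<And>j. j < L \<Longrightarrow> \<gamma>1 * fill_dist (Xi j) \<le> fill_dist (Xi (Suc j))"
      and g2: "\<And>j. j < L \<Longrightarrow> fill_dist (Xi (Suc j)) \<le> \<gamma>2 * fill_dist (Xi j)"
      and h0: "fill_dist (Xi 0) \<le> hmax"
      and lag: "\<And>j xi z. j \<le> L \<Longrightarrow> xi \<in> Xi j \<Longrightarrow> z \<in> Xi j \<Longrightarrow> chi j xi z = (if xi = z then 1 else 0)"
      and pw: "\<And>j xi x. j \<le> L \<Longrightarrow> xi \<in> Xi j \<Longrightarrow> \<bar>chi j xi x\<bar> \<le> Cpw * exp (- \<nu> * dist x xi / fill_dist (Xi j))"
      and l1: "1 \<le> l" and lL: "l \<le> L"
      by auto
    have hnn: "\<And>j. j \<le> L \<Longrightarrow> 0 \<le> fill_dist (Xi j)"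
      using fill_props(2)[OF compact ne] by blast
    have hmx: "j \<le> L \<Longrightarrow> fill_dist (Xi j) \<le> hmax" for j
    proof (induction j)
      case 0 then show ?case using h0 by simp
    next
      case (Suc j)
      then have "fill_dist (Xi (Suc j)) \<le> \<gamma>2 * fill_dist (Xi j)" using g2 by simp
      also have "\<dots> \<le> fill_dist (Xi j)" using hnn[of j] Suc.prems gammas
        by (simp add: mult_left_le_one_le)
      finally show ?case using Suc by simp
    qed
    obtain j where lj: "l = Suc j" using l1 by (cases l) auto
    have jL: "j < L" "j \<le> L" "Suc j \<le> L" using lj lL by auto
    define h' where "h' = fill_dist (Xi j)"
    define h where "h = fill_dist (Xi (Suc j))"
    define A where "A = (\<lambda>eta xi. prolong chi l eta xi
          - prolong_tr chi (K * fill_dist (Xi (l - 1)) * \<bar>ln (fill_dist (Xi (l - 1)))\<bar>) l eta xi)"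
    define r where "r = K * h' * \<bar>ln h'\<bar>"
    have A_eq: "A eta xi = (if dist xi eta \<le> r then 0 else chi j xi eta)" for eta xi
      unfolding A_def prolong_tr_def prolong_def r_def h'_def lj by simp
    have h'0: "0 \<le> h'" and h0': "0 \<le> h" unfolding h'_def h_def using hnn jL by auto
    have hh': "\<gamma>1 * h' \<le> h" "h \<le> \<gamma>2 * h'" unfolding h'_def h_def using g1 g2 jL by auto
    obtain xi0 where xi0: "xi0 \<in> Xi j" using ne[OF jL(2)] by auto
    have "1 \<le> Cpw" using pw[OF jL(2) xi0, of xi0] lag[OF jL(2) xi0 xi0] by simp
    then have Cpw0: "0 \<le> Cpw" by simp
    have goal_form: "l2_opnorm A (Xi j) (Xi (Suc j))
         \<le> Cpw * (Bc * \<gamma>1 powr (- e) / P) * (K * \<bar>ln h\<bar>) ^ d * h powr e"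
    proof (cases "h = 0")
      case True
      then have "h' = 0" using hh' h'0 gammas by (simp add: mult_le_0_iff)
      then have all: "x \<in> Xi j" for x using fill_zero[OF compact ne[OF jL(2)] fin[OF jL(2)]] h'_def by simp
      have A0: "A eta xi = 0" if "xi \<in> Xi j" for eta xi
        using lag[OF jL(2) that all[of eta]] \<open>h' = 0\<close> unfolding A_eq r_def by auto
      have "l2_opnorm A (Xi j) (Xi (Suc j)) \<le> sqrt (0 * 0)"
        by (rule schur) (use fin jL A0 in auto)
      then show ?thesis using True by simp
    next
      case False
      then have hpos: "0 < h" using h0' by simp
      have h'pos: "0 < h'"
      proof (rule ccontr)
        assume "\<not> 0 < h'"
        then have "h' = 0" using h'0 by simp
        then show False using hh'(2) hpos by simp
      qed
      have h'1: "h' < 1" using hmx[OF jL(2)] hmax unfolding h'_def by simp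
      have hmx': "h \<le> hmax" using hmx[OF jL(3)] unfolding h_def by simp
      define a where "a = \<nu> / (2 * h')"
      define E where "E = Cpw * h' powr e"
      have a0: "0 < a" unfolding a_def using nu_pos h'pos by simp
      have E0: "0 \<le> E" unfolding E_def using Cpw0 by simp
      have ar: "exp (- a * r) = h' powr e"
      proof -
        have "- a * r = e * ln h'"
          unfolding a_def r_def e_def using h'pos h'1 by (simp add: field_simps abs_if)
        then show ?thesis using h'pos by (simp add: powr_def)
      qed
      have ent: "\<bar>A eta xi\<bar> \<le> E * exp (- a * dist xi eta)" if xi: "xi \<in> Xi j" for eta xi
      proof (cases "dist xi eta \<le> r")
        case True
        then show ?thesis unfolding A_eq using E0 by simp
      next
        case False
        have "\<bar>A eta xi\<bar> = \<bar>chi j xi eta\<bar>" unfolding A_eq using False by simp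
        also have "\<dots> \<le> Cpw * exp (- \<nu> * dist eta xi / h')" using pw[OF jL(2) xi, of eta] unfolding h'_def .
        also have "- \<nu> * dist eta xi / h' = - a * dist xi eta + - a * dist xi eta"
          unfolding a_def using h'pos by (simp add: dist_commute field_simps)
        also have "exp (- a * dist xi eta + - a * dist xi eta) = exp (- a * dist xi eta) * exp (- a * dist xi eta)"
          by (rule exp_add)
        also have "exp (- a * dist xi eta) * exp (- a * dist xi eta) \<le> exp (- a * r) * exp (- a * dist xi eta)"
          using False a0 by (intro mult_right_mono) auto
        finally show ?thesis unfolding E_def ar using Cpw0 by (simp add: mult.assoc mult_left_mono)
      qed
      have bnd: "(\<Sum>x\<in>Xi i. exp (- a * dist x y)) \<le> Bc"
        if i: "i \<le> L" and ai: "\<nu> * \<gamma>1 / (2 * \<rho>) \<le> a * sep_rad (Xi i)" for i y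
        unfolding Bc_def
        by (rule exp_sum_all[OF compact sets_mu fin_mu ball_lower ball_upper c_pos(1) dim fin[OF i] a0 b0(1,2)])
           (auto intro: order.trans[OF b0(3) ai])
      have rho0: "0 < \<rho>" using rho by simp
      have aq1: "\<nu> * \<gamma>1 / (2 * \<rho>) \<le> a * sep_rad (Xi j)"
      proof -
        have "h' / \<rho> \<le> sep_rad (Xi j)" using qh[OF jL(2)] rho0 unfolding h'_def by (simp add: field_simps)
        then have "a * (h' / \<rho>) \<le> a * sep_rad (Xi j)" using a0 by (intro mult_left_mono) auto
        moreover have "a * (h' / \<rho>) = \<nu> / (2 * \<rho>)" unfolding a_def using h'pos by simp
        moreover have "\<nu> * \<gamma>1 / (2 * \<rho>) \<le> \<nu> / (2 * \<rho>)"
          using gammas nu_pos rho0 by (simp add: divide_right_mono)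
        ultimately show ?thesis by linarith
      qed
      have aq2: "\<nu> * \<gamma>1 / (2 * \<rho>) \<le> a * sep_rad (Xi (Suc j))"
      proof -
        have "\<gamma>1 * h' / \<rho> \<le> sep_rad (Xi (Suc j))"
          using qh[OF jL(3)] hh'(1) rho0 unfolding h_def by (simp add: field_simps)
        then have "a * (\<gamma>1 * h' / \<rho>) \<le> a * sep_rad (Xi (Suc j))" using a0 by (intro mult_left_mono) auto
        moreover have "a * (\<gamma>1 * h' / \<rho>) = \<nu> * \<gamma>1 / (2 * \<rho>)" unfolding a_def using h'pos by simp
        ultimately show ?thesis by linarith
      qed
      have "l2_opnorm A (Xi j) (Xi (Suc j)) \<le> sqrt ((E * Bc) * (E * Bc))"
      proof (rule schur)
        fix eta assume "eta \<in> Xi (Suc j)"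
        have "(\<Sum>xi\<in>Xi j. \<bar>A eta xi\<bar>) \<le> (\<Sum>xi\<in>Xi j. E * exp (- a * dist xi eta))"
          by (intro sum_mono ent)
        also have "\<dots> = E * (\<Sum>xi\<in>Xi j. exp (- a * dist xi eta))" by (simp add: sum_distrib_left)
        also have "\<dots> \<le> E * Bc" using bnd[OF jL(2) aq1] E0 by (intro mult_left_mono)
        finally show "(\<Sum>xi\<in>Xi j. \<bar>A eta xi\<bar>) \<le> E * Bc" .
      next
        fix xi assume xi: "xi \<in> Xi j"
        have "(\<Sum>eta\<in>Xi (Suc j). \<bar>A eta xi\<bar>) \<le> (\<Sum>eta\<in>Xi (Suc j). E * exp (- a * dist eta xi))"
          using ent[OF xi] by (intro sum_mono) (simp add: dist_commute)
        also have "\<dots> = E * (\<Sum>eta\<in>Xi (Suc j). exp (- a * dist eta xi))" by (simp add: sum_distrib_left)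
        also have "\<dots> \<le> E * Bc" using bnd[OF jL(3) aq2] E0 by (intro mult_left_mono)
        finally show "(\<Sum>eta\<in>Xi (Suc j). \<bar>A eta xi\<bar>) \<le> E * Bc" .
      qed (use fin jL E0 Bc1 in auto)
      also have "sqrt ((E * Bc) * (E * Bc)) = E * Bc" using E0 Bc1 by simp
      also have "E * Bc \<le> Cpw * Bc * (\<gamma>1 powr (- e) * h powr e)"
      proof -
        have "h' \<le> h / \<gamma>1" using hh'(1) gammas by (simp add: field_simps)
        then have "h' powr e \<le> (h / \<gamma>1) powr e" using h'0 e0 by (intro powr_mono2) auto
        also have "\<dots> = \<gamma>1 powr (- e) * h powr e"
          using gammas h0' by (simp add: powr_divide powr_minus_divide)
        finally show ?thesis unfolding E_def using Cpw0 Bc1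
          by (simp add: mult_left_mono mult.commute mult.left_commute)
      qed
      also have "\<dots> \<le> Cpw * (Bc * \<gamma>1 powr (- e) / P) * (K * \<bar>ln h\<bar>) ^ d * h powr e"
      proof -
        have "ln h \<le> ln hmax" using hpos hmx' by simp
        then have "\<bar>ln hmax\<bar> \<le> \<bar>ln h\<bar>" using hmax by simp
        then have "P \<le> (K * \<bar>ln h\<bar>) ^ d" unfolding P_def using K_pos lnh
          by (intro power_mono mult_left_mono) auto
        then have "1 \<le> (K * \<bar>ln h\<bar>) ^ d / P" using P0 by simp
        moreover have "0 \<le> Cpw * Bc * (\<gamma>1 powr (- e) * h powr e)" using Cpw0 Bc1 by simp
        ultimately have "Cpw * Bc * (\<gamma>1 powr (- e) * h powr e) \<le> Cpw * Bc * (\<gamma>1 powr (- e) * h powr e) * ((K * \<bar>ln h\<bar>) ^ d / P)"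
          by (metis mult.right_neutral mult_left_mono)
        also have "\<dots> = Cpw * (Bc * \<gamma>1 powr (- e) / P) * (K * \<bar>ln h\<bar>) ^ d * h powr e"
          by (simp add: field_simps)
        finally show ?thesis .
      qed
      finally show ?thesis .
    qed
    then show "l2_opnorm
       (\<lambda>eta xi. prolong chi l eta xi
          - prolong_tr chi (K * fill_dist (Xi (l - 1)) * \<bar>ln (fill_dist (Xi (l - 1)))\<bar>) l eta xi)
       (Xi (l - 1)) (Xi l)
     \<le> Cpw * (Bc * \<gamma>1 powr (- e) / P) * (K * \<bar>ln (fill_dist (Xi l))\<bar>) ^ d * fill_dist (Xi l) powr (\<nu> / 2 * K)"
      unfolding A_def h_def e_def lj by simp
  qed
qed


end
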